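(* Let $\Lambda$ be a finite, strongly connected $k$-graph with exactly one vertex, $y$ an $\mathbb{R}_+$-functor on $\Lambda$, and $\theta\in(0,\infty)$ such that condition (w-I) holds: $\rho(B_i(y,\theta))>1$ for all $1\le i\le k$. Then the function $w_{y,\theta}:F\mathcal{B}_\Lambda\to(0,\infty)$, $w_{y,\theta}(\lambda)=e^{-y(\lambda)}\big(\rho(B(y,\theta))^{-d(\lambda)}\big)^{1/\theta}$, is a weight on $\mathcal{B}_\Lambda$.
   Context: A $k$-graph is a countable small category $\Lambda$ with a degree functor $d:\Lambda\to\mathbb{N}^k$ satisfying unique factorization: if $d(\lambda)=m+n$ there are unique $\eta,\nu$ with $\lambda=\eta\nu$, $d(\eta)=m$, $d(\nu)=n$. $\Lambda^n=d^{-1}(n)$, $\Lambda^0$ = vertices, $r,s$ range/source; $e_i$ standard basis; finite: each $\Lambda^n$ finite; strongly connected: $v\Lambda w\ne\emptyset$ for all vertices (for finite $\Lambda$ this entails $\Lambda^{e_i}\ne\emptyset$ for all $i$). An $\mathbb{R}_+$-functor is $y:\Lambda\to[0,\infty)$ with $y(v)=0$ on vertices and $y(\lambda\nu)=y(\lambda)+y(\nu)$ when $s(\lambda)=r(\nu)$. With one vertex, $B_i(y,\theta)$ is the $1\times1$ matrix $\sum_{h\in\Lambda^{e_i}}e^{-\theta y(h)}=\rho(B_i(y,\theta))$; $\rho(B(y,\theta))^m=\prod_i\rho(B_i(y,\theta))^{m_i}$. A Bratteli diagram $\mathcal{B}$ has finite vertex sets $\mathcal{V}_n$ ($n\ge0$)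 and finite edge sets $\mathcal{E}_n$ ($n\ge1$), edges in $\mathcal{E}_n$ going from $\mathcal{V}_n$ to $\mathcal{V}_{n-1}$. A finite path of length $n$ is $f_1\cdots f_n$ with $f_j\in\mathcal{E}_j$, $s(f_j)=r(f_{j+1})$ (length-0 paths: vertices of $\mathcal{V}_0$); $F^n\mathcal{B}$ the set of these, $F\mathcal{B}=\bigcup_nF^n\mathcal{B}$. A weight on $\mathcal{B}$ is $w:F\mathcal{B}\to[0,\infty)$ with (i) $w(v)\le1$ for $v\in\mathcal{V}_0$; (ii) $\lim_n\sup\{w(\gamma):\gamma\in F^n\mathcal{B}\}=0$; (iii) $w(\gamma)\le w(\eta)$ whenever $\eta$ is an initial segment of $\gamma$. Stationary $k$-Bratteli diagram $\mathcal{B}_\Lambda$: $\mathcal{V}_n=\Lambda^0$; for $n\ge1$, $n\equiv i\pmod k$, $i\in\{1,\dots,k\}$, $\mathcal{E}_n$ has one edge from $q\in\mathcal{V}_n$ to $p\in\mathcal{V}_{n-1}$ for each $\lambda\in p\Lambda^{e_i}q$. A finite path $f_1\cdots f_n$ is identified with the morphism $f_1\cdots f_n\in\Lambda$, on which $y$ and $d$ are evaluated. *)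

theory Defs
  imports Complex_Main "HOL-Library.Countable_Set"
begin

text \<open>Degrees in N^k are represented as functions nat => nat vanishing at
 all indices j >= k (coordinates are indexed 0..k-1).\<close>

definition degs :: "nat \<Rightarrow> (nat \<Rightarrow> nat) set" where
  "degs k = {m. \<forall>j\<ge>k. m j = 0}"

definition unitdeg :: "nat \<Rightarrow> nat \<Rightarrow> nat" where
  "unitdeg i = (\<lambda>j. if j = i then 1 else 0)"

text \<open>A k-graph: a countable small category whose morphisms form the set L
 (objects are identified with identity morphisms), with range r, source s,
 composition cmp (defined when s x = r z), and degree functor d satisfying
 unique factorisation.\<close>

definition is_kgraph ::
  "nat \<Rightarrow> 'm set \<Rightarrow> ('m \<Rightarrow> 'm) \<Rightarrow> ('m \<Rightarrow> 'm) \<Rightarrow> ('m \<Rightarrow> 'm \<Rightarrow> 'm) \<Rightarrow> ('m \<Rightarrow> nat \<Rightarrow> nat) \<Rightarrow> bool" where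
  "is_kgraph k L r s cmp d \<longleftrightarrow>
     countable L \<and>
     (\<forall>x\<in>L. r x \<in> L \<and> s x \<in> L \<and> d x \<in> degs k) \<and>
     (\<forall>x\<in>L. r (r x) = r x \<and> s (r x) = r x \<and> r (s x) = s x \<and> s (s x) = s x) \<and>
     (\<forall>x\<in>L. cmp (r x) x = x \<and> cmp x (s x) = x) \<and>
     (\<forall>x\<in>L. \<forall>z\<in>L. s x = r z \<longrightarrow>
        cmp x z \<in> L \<and> r (cmp x z) = r x \<and> s (cmp x z) = s z \<and>
        d (cmp x z) = (\<lambda>j. d x j + d z j)) \<and>
     (\<forall>x\<in>L. \<forall>u\<in>L. \<forall>z\<in>L. s x = r u \<and> s u = r z \<longrightarrow>
        cmp (cmp x u) z = cmp x (cmp u z)) \<and>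
     (\<forall>x\<in>L. \<forall>m\<in>degs k. \<forall>n\<in>degs k. d x = (\<lambda>j. m j + n j) \<longrightarrow>
        (\<exists>!p. fst p \<in> L \<and> snd p \<in> L \<and> s (fst p) = r (snd p) \<and>
              x = cmp (fst p) (snd p) \<and> d (fst p) = m \<and> d (snd p) = n))"

definition deg_set :: "'m set \<Rightarrow> ('m \<Rightarrow> nat \<Rightarrow> nat) \<Rightarrow> (nat \<Rightarrow> nat) \<Rightarrow> 'm set" where
  "deg_set L d n = {x\<in>L. d x = n}"

definition kverts :: "'m set \<Rightarrow> ('m \<Rightarrow> nat \<Rightarrow> nat) \<Rightarrow> 'm set" where
  "kverts L d = deg_set L d (\<lambda>_. 0)"

definition finite_kgraph :: "'m set \<Rightarrow> ('m \<Rightarrow> nat \<Rightarrow> nat) \<Rightarrow> bool" where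
  "finite_kgraph L d \<longleftrightarrow> (\<forall>n. finite (deg_set L d n))"

definition strongly_connected ::
  "'m set \<Rightarrow> ('m \<Rightarrow> 'm) \<Rightarrow> ('m \<Rightarrow> 'm) \<Rightarrow> ('m \<Rightarrow> nat \<Rightarrow> nat) \<Rightarrow> bool" where
  "strongly_connected L r s d \<longleftrightarrow>
     (\<forall>v\<in>kverts L d. \<forall>w\<in>kverts L d. \<exists>x\<in>L. r x = v \<and> s x = w)"

definition is_Rplus_functor ::
  "'m set \<Rightarrow> ('m \<Rightarrow> 'm) \<Rightarrow> ('m \<Rightarrow> 'm) \<Rightarrow> ('m \<Rightarrow> 'm \<Rightarrow> 'm) \<Rightarrow> ('m \<Rightarrow> nat \<Rightarrow> nat)
   \<Rightarrow> ('m \<Rightarrow> real) \<Rightarrow> bool" where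
  "is_Rplus_functor L r s cmp d y \<longleftrightarrow>
     (\<forall>x\<in>L. y x \<ge> 0) \<and> (\<forall>v\<in>kverts L d. y v = 0) \<and>
     (\<forall>x\<in>L. \<forall>z\<in>L. s x = r z \<longrightarrow> y (cmp x z) = y x + y z)"

text \<open>One-vertex case: rho(B_i(y,theta)) = sum over h in Lambda^{e_i} of exp(-theta y(h))
 (index i from 0 to k-1), and rho(B(y,theta))^m = prod_i rho(B_i(y,theta))^{m_i}.\<close>
definition rhoB :: "'m set \<Rightarrow> ('m \<Rightarrow> nat \<Rightarrow> nat) \<Rightarrow> ('m \<Rightarrow> real) \<Rightarrow> real \<Rightarrow> nat \<Rightarrow> real" where
  "rhoB L d y \<theta> i = (\<Sum>h\<in>deg_set L d (unitdeg i). exp (- \<theta> * y h))"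

definition rhoB_pow ::
  "nat \<Rightarrow> 'm set \<Rightarrow> ('m \<Rightarrow> nat \<Rightarrow> nat) \<Rightarrow> ('m \<Rightarrow> real) \<Rightarrow> real \<Rightarrow> (nat \<Rightarrow> nat) \<Rightarrow> real" where
  "rhoB_pow k L d y \<theta> m = (\<Prod>i<k. rhoB L d y \<theta> i ^ m i)"

definition is_bratteli ::
  "(nat \<Rightarrow> 'v set) \<Rightarrow> (nat \<Rightarrow> 'e set) \<Rightarrow> ('e \<Rightarrow> 'v) \<Rightarrow> ('e \<Rightarrow> 'v) \<Rightarrow> bool" where
  "is_bratteli V E rng src \<longleftrightarrow>
     (\<forall>n. finite (V n)) \<and> (\<forall>n\<ge>1. finite (E n)) \<and>
     (\<forall>n\<ge>1. \<forall>e\<in>E n. src e \<in> V n \<and> rng e \<in> V (n - 1))"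

text \<open>Finite paths of length n: pairs (v, [f_1,...,f_n]) with f_j in E j,
 s(f_j) = r(f_{j+1}); v is the vertex of V 0 where the path starts
 (v = r(f_1) if n > 0; for n = 0 the path is just the vertex v).\<close>
definition fpaths ::
  "(nat \<Rightarrow> 'v set) \<Rightarrow> (nat \<Rightarrow> 'e set) \<Rightarrow> ('e \<Rightarrow> 'v) \<Rightarrow> ('e \<Rightarrow> 'v) \<Rightarrow> nat \<Rightarrow> ('v \<times> 'e list) set" where
  "fpaths V E rng src n = {(v, fs). length fs = n \<and> v \<in> V 0 \<and>
      (\<forall>j<n. fs ! j \<in> E (Suc j)) \<and> (0 < n \<longrightarrow> rng (fs ! 0) = v) \<and>
      (\<forall>j. Suc j < n \<longrightarrow> src (fs ! j) = rng (fs ! Suc j))}"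

definition is_weight ::
  "(nat \<Rightarrow> 'v set) \<Rightarrow> (nat \<Rightarrow> 'e set) \<Rightarrow> ('e \<Rightarrow> 'v) \<Rightarrow> ('e \<Rightarrow> 'v) \<Rightarrow> ('v \<times> 'e list \<Rightarrow> real) \<Rightarrow> bool" where
  "is_weight V E rng src w \<longleftrightarrow>
     is_bratteli V E rng src \<and>
     (\<forall>n. \<forall>\<gamma>\<in>fpaths V E rng src n. 0 \<le> w \<gamma>) \<and>
     (\<forall>v\<in>V 0. w (v, []) \<le> 1) \<and>
     (\<lambda>n. Sup (w ` fpaths V E rng src n)) \<longlonglongrightarrow> 0 \<and>
     (\<forall>n. \<forall>\<gamma>\<in>fpaths V E rng src n. \<forall>m\<le>n. w \<gamma> \<le> w (fst \<gamma>, take m (snd \<gamma>)))"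

definition BL_V :: "'m set \<Rightarrow> ('m \<Rightarrow> nat \<Rightarrow> nat) \<Rightarrow> nat \<Rightarrow> 'm set" where
  "BL_V L d n = kverts L d"

text \<open>Level n >= 1, n = i (mod k) with i in {1..k}: edges are the morphisms of
 degree e_i; in 0-based coordinates that is unitdeg ((n-1) mod k).\<close>
definition BL_E :: "nat \<Rightarrow> 'm set \<Rightarrow> ('m \<Rightarrow> nat \<Rightarrow> nat) \<Rightarrow> nat \<Rightarrow> 'm set" where
  "BL_E k L d n = (if n = 0 then {} else deg_set L d (unitdeg ((n - 1) mod k)))"

definition path_mor :: "('m \<Rightarrow> 'm \<Rightarrow> 'm) \<Rightarrow> 'm \<times> 'm list \<Rightarrow> 'm" where
  "path_mor cmp \<gamma> = foldl cmp (fst \<gamma>) (snd \<gamma>)"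

definition w_yth ::
  "nat \<Rightarrow> 'm set \<Rightarrow> ('m \<Rightarrow> nat \<Rightarrow> nat) \<Rightarrow> ('m \<Rightarrow> real) \<Rightarrow> real \<Rightarrow> 'm \<Rightarrow> real" where
  "w_yth k L d y \<theta> x = exp (- y x) * (inverse (rhoB_pow k L d y \<theta> (d x))) powr (1 / \<theta>)"

end

theory Submission
  imports Defs
begin

theorem proposition6p7:
  fixes k :: nat and L :: "'m set" and r s :: "'m \<Rightarrow> 'm"
    and cmp :: "'m \<Rightarrow> 'm \<Rightarrow> 'm" and d :: "'m \<Rightarrow> nat \<Rightarrow> nat"
    and y :: "'m \<Rightarrow> real" and \<theta> :: real
  assumes "0 < k"
    and "is_kgraph k L r s cmp d"
    and "finite_kgraph L d"
    and "strongly_connected L r s d"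
    and "card (kverts L d) = 1"
    and "is_Rplus_functor L r s cmp d y"
    and "0 < \<theta>"
    and "\<forall>i<k. rhoB L d y \<theta> i > 1"
  shows "is_weight (BL_V L d) (BL_E k L d) r s (\<lambda>\<gamma>. w_yth k L d y \<theta> (path_mor cmp \<gamma>))"
proof -
  have KL: "\<forall>x\<in>L. r x \<in> L \<and> s x \<in> L \<and> d x \<in> degs k"
    using assms(2) unfolding is_kgraph_def by (elim conjE) assumption
  have KR: "\<forall>x\<in>L. r (r x) = r x \<and> s (r x) = r x \<and> r (s x) = s x \<and> s (s x) = s x"
    using assms(2) unfolding is_kgraph_def by (elim conjE) assumption
  have KI: "\<forall>x\<in>L. cmp (r x) x = x \<and> cmp x (s x) = x"
    using assms(2) unfolding is_kgraph_def by (elim conjE) assumption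
  have KC: "\<forall>x\<in>L. \<forall>z\<in>L. s x = r z \<longrightarrow>
        cmp x z \<in> L \<and> r (cmp x z) = r x \<and> s (cmp x z) = s z \<and>
        d (cmp x z) = (\<lambda>j. d x j + d z j)"
    using assms(2) unfolding is_kgraph_def by (elim conjE) assumption
  have LL: "\<And>x. x \<in> L \<Longrightarrow> r x \<in> L \<and> s x \<in> L" using KL by blast
  have rr: "\<And>x. x \<in> L \<Longrightarrow> r (r x) = r x \<and> s (r x) = r x \<and> r (s x) = s x \<and> s (s x) = s x"
    using KR by blast
  have cid: "\<And>x. x \<in> L \<Longrightarrow> cmp (r x) x = x \<and> cmp x (s x) = x" using KI by blast
  have comp: "\<And>x z. x \<in> L \<Longrightarrow> z \<in> L \<Longrightarrow> s x = r z \<Longrightarrow>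
        cmp x z \<in> L \<and> r (cmp x z) = r x \<and> s (cmp x z) = s z \<and>
        d (cmp x z) = (\<lambda>j. d x j + d z j)" using KC by blast
  have idd: "d u = (\<lambda>_. 0)" if u: "u \<in> L" "r u = u" "s u = u" for u
  proof -
    have "cmp u u = u" using cid[OF u(1)] u by simp
    moreover have "d (cmp u u) = (\<lambda>j. d u j + d u j)" using comp[OF u(1) u(1)] u by simp
    ultimately have "\<forall>j. d u j = d u j + d u j" by metis
    thus ?thesis by auto
  qed
  have rv: "r x \<in> kverts L d \<and> s x \<in> kverts L d" if "x \<in> L" for x
    using idd[of "r x"] idd[of "s x"] LL[OF that] rr[OF that]
    by (simp add: kverts_def deg_set_def)
  obtain v0 where KV: "kverts L d = {v0}" using assms(5) card_1_singletonE by blast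
  have v0L: "v0 \<in> L" and dv0: "d v0 = (\<lambda>_. 0)" using KV by (auto simp: kverts_def deg_set_def)
  have rs0: "\<And>x. x \<in> L \<Longrightarrow> r x = v0 \<and> s x = v0" using rv KV by blast
  have Y1: "\<forall>x\<in>L. y x \<ge> 0"
    using assms(6) unfolding is_Rplus_functor_def by (elim conjE) assumption
  have Y2: "\<forall>v\<in>kverts L d. y v = 0"
    using assms(6) unfolding is_Rplus_functor_def by (elim conjE) assumption
  have Y3: "\<forall>x\<in>L. \<forall>z\<in>L. s x = r z \<longrightarrow> y (cmp x z) = y x + y z"
    using assms(6) unfolding is_Rplus_functor_def by (elim conjE) assumption
  have ypos: "\<And>x. x \<in> L \<Longrightarrow> y x \<ge> 0" using Y1 by blast
  have yv0: "y v0 = 0" using Y2 KV by blast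
  have yadd: "\<And>x z. x \<in> L \<Longrightarrow> z \<in> L \<Longrightarrow> s x = r z \<Longrightarrow> y (cmp x z) = y x + y z"
    using Y3 by blast
  define \<rho> where "\<rho> = rhoB L d y \<theta>"
  define P where "P = rhoB_pow k L d y \<theta>"
  define W where "W = w_yth k L d y \<theta>"
  define \<rho>m where "\<rho>m = Min (\<rho> ` {..<k})"
  define q where "q = inverse \<rho>m powr (1 / \<theta>)"
  have \<rho>1: "\<And>i. i < k \<Longrightarrow> \<rho> i > 1" using assms(8) \<rho>_def by auto
  have \<rho>mle: "\<And>i. i < k \<Longrightarrow> \<rho>m \<le> \<rho> i" unfolding \<rho>m_def by auto
  have \<rho>m1: "\<rho>m > 1"
  proof -
    have "\<rho>m \<in> \<rho> ` {..<k}" unfolding \<rho>m_def using assms(1) by (intro Min_in) auto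
    thus ?thesis using \<rho>1 by auto
  qed
  have q0: "0 < q" unfolding q_def using \<rho>m1 by simp
  have q1: "q < 1"
  proof -
    have "inverse \<rho>m powr (1/\<theta>) < 1 powr (1/\<theta>)"
      using \<rho>m1 assms(7) by (intro powr_less_mono2) (auto simp: inverse_less_1_iff)
    thus ?thesis unfolding q_def by simp
  qed
  have Ppos: "P m > 0" for m unfolding P_def rhoB_pow_def using \<rho>1 \<rho>_def
    by (intro prod_pos) (metis lessThan_iff less_trans zero_less_one zero_less_power)
  have P0: "P (\<lambda>_. 0) = 1" unfolding P_def rhoB_pow_def by simp
  have Padd: "P (\<lambda>j. m j + unitdeg i j) = P m * \<rho> i" if "i < k" for m i
  proof -
    have "P (\<lambda>j. m j + unitdeg i j) = (\<Prod>j<k. \<rho> j ^ m j) * (\<Prod>j<k. \<rho> j ^ unitdeg i j)"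
      unfolding P_def rhoB_pow_def \<rho>_def by (simp add: power_add prod.distrib)
    also have "(\<Prod>j<k. \<rho> j ^ unitdeg i j) = (\<Prod>j<k. if j = i then \<rho> j else 1)"
      by (rule prod.cong) (auto simp: unitdeg_def)
    also have "\<dots> = \<rho> i" using that by (simp add: prod.delta)
    finally show ?thesis unfolding P_def rhoB_pow_def \<rho>_def by simp
  qed
  have Wnn: "W x \<ge> 0" for x unfolding W_def w_yth_def by simp
  have Wv0: "W v0 = 1" unfolding W_def w_yth_def using yv0 dv0 P0 P_def by simp
  have step: "cmp a f \<in> L \<and> W (cmp a f) \<le> W a * q"
    if a: "a \<in> L" and f: "f \<in> L" "d f = unitdeg i" and i: "i < k" for a f i
  proof -
    have sr: "s a = r f" using rs0 a f by simp
    have c: "cmp a f \<in> L" and dc: "d (cmp a f) = (\<lambda>j. d a j + unitdeg i j)"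
      using comp[OF a f(1) sr] f by auto
    have yc: "y (cmp a f) = y a + y f" using yadd[OF a f(1) sr] .
    have "W (cmp a f) = exp (- y a) * exp (- y f) * (inverse (P (d a) * \<rho> i)) powr (1/\<theta>)"
      unfolding W_def w_yth_def P_def[symmetric] using dc yc Padd[OF i]
      by (simp add: exp_add[symmetric])
    also have "\<dots> = exp (- y a) * exp (- y f) * (inverse (P (d a)) powr (1/\<theta>) * inverse (\<rho> i) powr (1/\<theta>))"
      using Ppos \<rho>1[OF i] by (simp add: powr_mult)
    also have "\<dots> \<le> exp (- y a) * 1 * (inverse (P (d a)) powr (1/\<theta>) * q)"
    proof (intro mult_mono)
      show "exp (- y f) \<le> 1" using ypos[OF f(1)] by simp
      show "inverse (\<rho> i) powr (1 / \<theta>) \<le> q" unfolding q_def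
        using \<rho>mle[OF i] \<rho>m1 assms(7) by (intro powr_mono2) (auto simp: le_imp_inverse_le)
    qed auto
    also have "\<dots> = W a * q" unfolding W_def w_yth_def P_def by simp
    finally show ?thesis using c by simp
  qed

  define pm where "pm fs m = path_mor cmp (v0, take m fs)" for fs m
  have pm_Suc: "pm fs (Suc m) = cmp (pm fs m) (fs ! m)" if "m < length fs" for fs m
    unfolding pm_def path_mor_def using that by (simp add: take_Suc_conv_app_nth)
  have pth: "pm fs m \<in> L \<and> W (pm fs m) \<le> q ^ m"
    if E: "\<forall>j<length fs. fs!j \<in> L \<and> d (fs!j) = unitdeg (j mod k)" and "m \<le> length fs" for fs m
    using that(2)
  proof (induction m)
    case 0
    then show ?case using v0L Wv0 by (simp add: pm_def path_mor_def)
  next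
    case (Suc m)
    hence m: "m < length fs" by simp
    have IH: "pm fs m \<in> L" "W (pm fs m) \<le> q ^ m" using Suc by auto
    have st: "pm fs (Suc m) \<in> L \<and> W (pm fs (Suc m)) \<le> W (pm fs m) * q"
      unfolding pm_Suc[OF m] using step[OF IH(1), of "fs!m" "m mod k"] E m assms(1) by auto
    moreover have "W (pm fs m) * q \<le> q ^ m * q" using IH(2) q0 by (intro mult_right_mono) auto
    ultimately show ?case by (simp add: mult.commute)
  qed
  have pmono: "W (pm fs n') \<le> W (pm fs m)"
    if E: "\<forall>j<length fs. fs!j \<in> L \<and> d (fs!j) = unitdeg (j mod k)" and mn: "m \<le> n'" for fs m n'
  proof (rule lift_Suc_antimono_le[of "\<lambda>m. W (pm fs m)", OF _ mn])
    fix m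
    show "W (pm fs (Suc m)) \<le> W (pm fs m)"
    proof (cases "m < length fs")
      case True
      have IH: "pm fs m \<in> L" using pth[OF E, of m] True by simp
      have "W (pm fs (Suc m)) \<le> W (pm fs m) * q"
        unfolding pm_Suc[OF True] using step[OF IH, of "fs!m" "m mod k"] E True assms(1) by auto
      also have "\<dots> \<le> W (pm fs m)" using Wnn[of "pm fs m"] q1 by (simp add: mult_left_le)
      finally show ?thesis .
    next
      case False
      then show ?thesis by (simp add: pm_def)
    qed
  qed
  have FP: "\<exists>fs. \<gamma> = (v0, fs) \<and> length fs = n \<and>
      (\<forall>j<length fs. fs!j \<in> L \<and> d (fs!j) = unitdeg (j mod k))"
    if "\<gamma> \<in> fpaths (BL_V L d) (BL_E k L d) r s n" for \<gamma> n
    using that KV by (cases \<gamma>) (auto simp: fpaths_def BL_V_def BL_E_def deg_set_def)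
  have Wle: "W (path_mor cmp \<gamma>) \<le> q ^ n" if g: "\<gamma> \<in> fpaths (BL_V L d) (BL_E k L d) r s n" for \<gamma> n
  proof -
    obtain fs where fs: "\<gamma> = (v0, fs)" "length fs = n"
      "\<forall>j<length fs. fs!j \<in> L \<and> d (fs!j) = unitdeg (j mod k)" using FP[OF g] by blast
    have "path_mor cmp \<gamma> = pm fs n" using fs by (simp add: pm_def)
    thus ?thesis using pth[OF fs(3), of n] fs by simp
  qed
  have ne: "deg_set L d (unitdeg i) \<noteq> {}" if "i < k" for i
    using \<rho>1[OF that] unfolding \<rho>_def rhoB_def by auto
  define e where "e i = (SOME f. f \<in> deg_set L d (unitdeg i))" for i
  have e: "e i \<in> L \<and> d (e i) = unitdeg i" if "i < k" for i
    using someI_ex[of "\<lambda>f. f \<in> deg_set L d (unitdeg i)"] ne[OF that]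
    unfolding e_def deg_set_def by auto
  have fin: "finite (fpaths (BL_V L d) (BL_E k L d) r s n)" for n
  proof -
    define A where "A = (\<Union>i<k. deg_set L d (unitdeg i))"
    have "finite A" unfolding A_def using assms(3) finite_kgraph_def by auto
    have "fpaths (BL_V L d) (BL_E k L d) r s n \<subseteq> {v0} \<times> {xs. set xs \<subseteq> A \<and> length xs = n}"
    proof
      fix \<gamma> assume "\<gamma> \<in> fpaths (BL_V L d) (BL_E k L d) r s n"
      from FP[OF this] obtain fs where fs: "\<gamma> = (v0, fs)" "length fs = n"
        "\<forall>j<length fs. fs!j \<in> L \<and> d (fs!j) = unitdeg (j mod k)" by blast
      have "set fs \<subseteq> A"
      proof
        fix x assume "x \<in> set fs"
        then obtain j where "j < length fs" "x = fs ! j" by (auto simp: in_set_conv_nth)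
        thus "x \<in> A" using fs(3) assms(1) unfolding A_def deg_set_def by auto
      qed
      thus "\<gamma> \<in> {v0} \<times> {xs. set xs \<subseteq> A \<and> length xs = n}" using fs by auto
    qed
    thus ?thesis using finite_lists_length_eq[OF \<open>finite A\<close>] by (auto intro: finite_subset)
  qed
  have nonempty: "fpaths (BL_V L d) (BL_E k L d) r s n \<noteq> {}" for n
  proof -
    define fs where "fs = map (\<lambda>j. e (j mod k)) [0..<n]"
    have ej: "e (j mod k) \<in> L \<and> d (e (j mod k)) = unitdeg (j mod k)" for j
      using e assms(1) by auto
    have "(v0, fs) \<in> fpaths (BL_V L d) (BL_E k L d) r s n"
      unfolding fpaths_def BL_V_def BL_E_def deg_set_def fs_def
      using KV ej rs0 e[of 0] assms(1) by auto
    thus ?thesis by blast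
  qed
  show ?thesis unfolding is_weight_def
  proof (intro conjI)
    show "is_bratteli (BL_V L d) (BL_E k L d) r s"
      unfolding is_bratteli_def BL_V_def BL_E_def
      using KV assms(3) rs0 by (auto simp: finite_kgraph_def deg_set_def)
    show "\<forall>n. \<forall>\<gamma>\<in>fpaths (BL_V L d) (BL_E k L d) r s n. 0 \<le> w_yth k L d y \<theta> (path_mor cmp \<gamma>)"
      using Wnn W_def by simp
    show "\<forall>v\<in>BL_V L d 0. w_yth k L d y \<theta> (path_mor cmp (v, [])) \<le> 1"
      using KV Wv0 W_def by (simp add: BL_V_def path_mor_def)
    show "(\<lambda>n. Sup ((\<lambda>\<gamma>. w_yth k L d y \<theta> (path_mor cmp \<gamma>)) ` fpaths (BL_V L d) (BL_E k L d) r s n)) \<longlonglongrightarrow> 0"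
    proof (rule tendsto_sandwich[OF _ _ tendsto_const LIMSEQ_power_zero[of q]])
      show "norm q < 1" using q0 q1 by simp
      show "\<forall>\<^sub>F n in sequentially. (0::real) \<le> Sup ((\<lambda>\<gamma>. w_yth k L d y \<theta> (path_mor cmp \<gamma>)) ` fpaths (BL_V L d) (BL_E k L d) r s n)"
      proof (intro always_eventually allI)
        fix n
        obtain g where g: "g \<in> fpaths (BL_V L d) (BL_E k L d) r s n" using nonempty[of n] by blast
        show "(0::real) \<le> Sup ((\<lambda>\<gamma>. w_yth k L d y \<theta> (path_mor cmp \<gamma>)) ` fpaths (BL_V L d) (BL_E k L d) r s n)"
          using fin[of n] nonempty[of n] Wnn g unfolding W_def
          by (subst cSup_eq_Max) (auto simp: Max_ge_iff)
      qed
      show "\<forall>\<^sub>F n in sequentially. Sup ((\<lambda>\<gamma>. w_yth k L d y \<theta> (path_mor cmp \<gamma>)) ` fpaths (BL_V L d) (BL_E k L d) r s n) \<le> q ^ n"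
        using fin nonempty Wle unfolding W_def
        by (intro always_eventually allI) (auto simp: cSup_eq_Max Max_le_iff)
    qed
    show "\<forall>n. \<forall>\<gamma>\<in>fpaths (BL_V L d) (BL_E k L d) r s n. \<forall>m\<le>n.
      w_yth k L d y \<theta> (path_mor cmp \<gamma>) \<le> w_yth k L d y \<theta> (path_mor cmp (fst \<gamma>, take m (snd \<gamma>)))"
    proof (intro allI ballI impI)
      fix n \<gamma> m assume g: "\<gamma> \<in> fpaths (BL_V L d) (BL_E k L d) r s n" and mn: "m \<le> n"
      obtain fs where fs: "\<gamma> = (v0, fs)" "length fs = n"
        "\<forall>j<length fs. fs!j \<in> L \<and> d (fs!j) = unitdeg (j mod k)" using FP[OF g] by blast
      have "W (pm fs n) \<le> W (pm fs m)" using pmono[OF fs(3) mn] .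
      thus "w_yth k L d y \<theta> (path_mor cmp \<gamma>) \<le> w_yth k L d y \<theta> (path_mor cmp (fst \<gamma>, take m (snd \<gamma>)))"
        using fs unfolding W_def pm_def by simp
    qed
  qed
qed

end
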